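(* If expressions $e_1$ and $e_2$ are compatible and $[\![C_1]\!]$ and $[\![C_2]\!]$ are total functions, then $[\![(\mathsf{assume}\ e_1;C_1)+(\mathsf{assume}\ e_2;C_2)]\!]$ is a total function.
   Context: $\mathcal A=\langle U,+,\cdot,\mathbf 0,\mathbf 1\rangle$ is a partial semiring ($+$ commutative, associative, possibly partial, unit $\mathbf 0$; $\cdot$ total, associative, unit $\mathbf 1$; two-sided distributivity; $\mathbf 0$ annihilates), naturally ordered ($u\le v$ iff $\exists w.\,u+w=v$ is a partial order), Scott continuous, with a top element. Infinite sums are suprema of finite partial sums. $\mathcal W(\Sigma)$: maps $m:\Sigma\to U$ with countable support and defined mass, with pointwise operations. $\eta(\sigma)(\tau)=\mathbf 1$ if $\sigma=\tau$ else $\mathbf 0$; $f^\dagger(m)(\tau)=\sum_{\sigma\in\mathrm{supp}(m)}m(\sigma)\cdot f(\sigma)(\tau)$. Program semantics $[\![C]\!]:\Sigma\to\mathcal W(\Sigma)$ (possibly partial): $[\![C_1;C_2]\!](\sigma)=[\![C_2]\!]^\dagger([\![C_1]\!](\sigma))$, $[\![C_1+C_2]\!](\sigma)=[\![C_1]\!](\sigma)+[\![C_2]\!](\sigma)$, $[\![\mathsf{assume}\ e]\!](\sigma)=[\![e]\!](\sigma)\cdot\eta(\sigma)$. An expression $e$ is a test $b$ (Boolean combination of $\mathsf{true},\mathsf{false}$ and primitive tests $t\subseteq\Sigma$, with $[\![b]\!](\sigma)\in\{\mathbf 0,\mathbf 1\}$, $[\![t]\!](\sigma)=\mathbf 1$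 iff $\sigma\in t$) or a weight $u\in U$ with $[\![u]\!](\sigma)=u$. Expressions $e_1,e_2$ are compatible if $[\![e_1]\!](\sigma)+[\![e_2]\!](\sigma)$ is defined for every $\sigma\in\Sigma$. *)

theory Defs
  imports Main "HOL-Library.Countable_Set"
begin

record 'u psr =
  pplus  :: "'u \<Rightarrow> 'u \<Rightarrow> 'u option"
  ptimes :: "'u \<Rightarrow> 'u \<Rightarrow> 'u"
  pzero  :: 'u
  pone   :: 'u

definition nle :: "'u psr \<Rightarrow> 'u \<Rightarrow> 'u \<Rightarrow> bool" where
  "nle A u v \<longleftrightarrow> (\<exists>w. pplus A u w = Some v)"

definition is_lub :: "'u psr \<Rightarrow> 'u set \<Rightarrow> 'u \<Rightarrow> bool" where
  "is_lub A S x \<longleftrightarrow> (\<forall>s\<in>S. nle A s x) \<and> (\<forall>y. (\<forall>s\<in>S. nle A s y) \<longrightarrow> nle A x y)"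

definition directed :: "'u psr \<Rightarrow> 'u set \<Rightarrow> bool" where
  "directed A D \<longleftrightarrow> D \<noteq> {} \<and> (\<forall>a\<in>D. \<forall>b\<in>D. \<exists>c\<in>D. nle A a c \<and> nle A b c)"

definition partial_semiring :: "'u psr \<Rightarrow> bool" where
  "partial_semiring A \<longleftrightarrow>
     \<comment> \<open>addition: commutative, (partially) associative, unit 0\<close>
     (\<forall>a b. pplus A a b = pplus A b a) \<and>
     (\<forall>a b c. Option.bind (pplus A a b) (\<lambda>x. pplus A x c)
            = Option.bind (pplus A b c) (\<lambda>y. pplus A a y)) \<and>
     (\<forall>a. pplus A a (pzero A) = Some a) \<and>
     \<comment> \<open>multiplication: total, associative, unit 1\<close>
     (\<forall>a b c. ptimes A (ptimes A a b) c = ptimes A a (ptimes A b c)) \<and>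
     (\<forall>a. ptimes A (pone A) a = a \<and> ptimes A a (pone A) = a) \<and>
     \<comment> \<open>two-sided distributivity (whenever b + c is defined)\<close>
     (\<forall>a b c d. pplus A b c = Some d \<longrightarrow>
          pplus A (ptimes A a b) (ptimes A a c) = Some (ptimes A a d) \<and>
          pplus A (ptimes A b a) (ptimes A c a) = Some (ptimes A d a)) \<and>
     \<comment> \<open>0 annihilates\<close>
     (\<forall>a. ptimes A (pzero A) a = pzero A \<and> ptimes A a (pzero A) = pzero A)"

definition good_semiring :: "'u psr \<Rightarrow> bool" where
  "good_semiring A \<longleftrightarrow>
     partial_semiring A \<and>
     \<comment> \<open>natural order is a partial order\<close>
     (\<forall>u. nle A u u) \<and>
     (\<forall>u v w. nle A u v \<longrightarrow> nle A v w \<longrightarrow> nle A u w) \<and>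
     (\<forall>u v. nle A u v \<longrightarrow> nle A v u \<longrightarrow> u = v) \<and>
     \<comment> \<open>Scott continuity: directed suprema exist and the operations preserve them\<close>
     (\<forall>D. directed A D \<longrightarrow> (\<exists>x. is_lub A D x)) \<and>
     (\<forall>D d u v. directed A D \<longrightarrow> is_lub A D d \<longrightarrow> pplus A d u = Some v \<longrightarrow>
          is_lub A {w. \<exists>s\<in>D. pplus A s u = Some w} v) \<and>
     (\<forall>D d u. directed A D \<longrightarrow> is_lub A D d \<longrightarrow>
          is_lub A (ptimes A u ` D) (ptimes A u d) \<and>
          is_lub A ((\<lambda>s. ptimes A s u) ` D) (ptimes A d u)) \<and>
     \<comment> \<open>top element\<close>
     (\<exists>t. \<forall>u. nle A u t)"

inductive fsum_rel :: "'u psr \<Rightarrow> ('a \<Rightarrow> 'u) \<Rightarrow> 'a set \<Rightarrow> 'u \<Rightarrow> bool"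
  for A :: "'u psr" and f :: "'a \<Rightarrow> 'u" where
  fsum_empty: "fsum_rel A f {} (pzero A)"
| fsum_insert: "fsum_rel A f F v \<Longrightarrow> x \<notin> F \<Longrightarrow> pplus A v (f x) = Some w
      \<Longrightarrow> fsum_rel A f (insert x F) w"

definition fsum :: "'u psr \<Rightarrow> ('a \<Rightarrow> 'u) \<Rightarrow> 'a set \<Rightarrow> 'u option" where
  "fsum A f F = (if \<exists>v. fsum_rel A f F v then Some (THE v. fsum_rel A f F v) else None)"

definition isum :: "'u psr \<Rightarrow> ('a \<Rightarrow> 'u) \<Rightarrow> 'a set \<Rightarrow> 'u option" where
  "isum A f S = (if \<forall>F. finite F \<and> F \<subseteq> S \<longrightarrow> fsum A f F \<noteq> None
     then Some (THE v. is_lub A {the (fsum A f F) | F. finite F \<and> F \<subseteq> S} v)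
     else None)"

definition supp :: "'u psr \<Rightarrow> ('s \<Rightarrow> 'u) \<Rightarrow> 's set" where
  "supp A m = {\<sigma>. m \<sigma> \<noteq> pzero A}"

definition weighting :: "'u psr \<Rightarrow> ('s \<Rightarrow> 'u) \<Rightarrow> bool" where
  "weighting A m \<longleftrightarrow> countable (supp A m) \<and> isum A m (supp A m) \<noteq> None"

definition eta :: "'u psr \<Rightarrow> 's \<Rightarrow> 's \<Rightarrow> 'u" where
  "eta A \<sigma> = (\<lambda>\<tau>. if \<sigma> = \<tau> then pone A else pzero A)"

definition scale :: "'u psr \<Rightarrow> 'u \<Rightarrow> ('s \<Rightarrow> 'u) \<Rightarrow> 's \<Rightarrow> 'u" where
  "scale A u m = (\<lambda>\<tau>. ptimes A u (m \<tau>))"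

definition wplus :: "'u psr \<Rightarrow> ('s \<Rightarrow> 'u) \<Rightarrow> ('s \<Rightarrow> 'u) \<Rightarrow> ('s \<Rightarrow> 'u) option" where
  "wplus A m1 m2 =
     (if (\<forall>\<tau>. pplus A (m1 \<tau>) (m2 \<tau>) \<noteq> None)
          \<and> weighting A (\<lambda>\<tau>. the (pplus A (m1 \<tau>) (m2 \<tau>)))
      then Some (\<lambda>\<tau>. the (pplus A (m1 \<tau>) (m2 \<tau>))) else None)"

definition kext :: "'u psr \<Rightarrow> ('s \<Rightarrow> ('s \<Rightarrow> 'u) option) \<Rightarrow> ('s \<Rightarrow> 'u) \<Rightarrow> ('s \<Rightarrow> 'u) option" where
  "kext A f m =
     (let g = (\<lambda>\<tau>. isum A (\<lambda>\<sigma>. ptimes A (m \<sigma>) (the (f \<sigma>) \<tau>)) (supp A m)) in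
      if (\<forall>\<sigma>\<in>supp A m. f \<sigma> \<noteq> None) \<and> (\<forall>\<tau>. g \<tau> \<noteq> None)
         \<and> weighting A (\<lambda>\<tau>. the (g \<tau>))
      then Some (\<lambda>\<tau>. the (g \<tau>)) else None)"

datatype 's bexp = BTrue | BFalse | BPrim "'s set" | BNot "'s bexp"
  | BAnd "'s bexp" "'s bexp" | BOr "'s bexp" "'s bexp"

fun bval :: "'s bexp \<Rightarrow> 's \<Rightarrow> bool" where
  "bval BTrue \<sigma> = True"
| "bval BFalse \<sigma> = False"
| "bval (BPrim t) \<sigma> = (\<sigma> \<in> t)"
| "bval (BNot b) \<sigma> = (\<not> bval b \<sigma>)"
| "bval (BAnd b1 b2) \<sigma> = (bval b1 \<sigma> \<and> bval b2 \<sigma>)"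
| "bval (BOr b1 b2) \<sigma> = (bval b1 \<sigma> \<or> bval b2 \<sigma>)"

datatype ('s, 'u) expr = Test "'s bexp" | Weight 'u

fun eval :: "'u psr \<Rightarrow> ('s, 'u) expr \<Rightarrow> 's \<Rightarrow> 'u" where
  "eval A (Test b) \<sigma> = (if bval b \<sigma> then pone A else pzero A)"
| "eval A (Weight u) \<sigma> = u"

definition compatible :: "'u psr \<Rightarrow> ('s, 'u) expr \<Rightarrow> ('s, 'u) expr \<Rightarrow> bool" where
  "compatible A e1 e2 \<longleftrightarrow> (\<forall>\<sigma>. pplus A (eval A e1 \<sigma>) (eval A e2 \<sigma>) \<noteq> None)"

type_synonym ('s, 'u) den = "'s \<Rightarrow> ('s \<Rightarrow> 'u) option"

definition sem_seq :: "'u psr \<Rightarrow> ('s, 'u) den \<Rightarrow> ('s, 'u) den \<Rightarrow> ('s, 'u) den" where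
  "sem_seq A c1 c2 = (\<lambda>\<sigma>. Option.bind (c1 \<sigma>) (kext A c2))"

definition sem_plus :: "'u psr \<Rightarrow> ('s, 'u) den \<Rightarrow> ('s, 'u) den \<Rightarrow> ('s, 'u) den" where
  "sem_plus A c1 c2 = (\<lambda>\<sigma>. Option.bind (c1 \<sigma>) (\<lambda>m1. Option.bind (c2 \<sigma>) (\<lambda>m2. wplus A m1 m2)))"

definition sem_assume :: "'u psr \<Rightarrow> ('s, 'u) expr \<Rightarrow> ('s, 'u) den" where
  "sem_assume A e = (\<lambda>\<sigma>. Some (scale A (eval A e \<sigma>) (eta A \<sigma>)))"

definition wf_den :: "'u psr \<Rightarrow> ('s, 'u) den \<Rightarrow> bool" where
  "wf_den A c \<longleftrightarrow> (\<forall>\<sigma> m. c \<sigma> = Some m \<longrightarrow> weighting A m)"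

definition total_den :: "('s, 'u) den \<Rightarrow> bool" where
  "total_den c \<longleftrightarrow> (\<forall>\<sigma>. c \<sigma> \<noteq> None)"

end

theory Submission
  imports Defs
begin

lemma ps_comm: "partial_semiring A \<Longrightarrow> pplus A a b = pplus A b a"
  unfolding partial_semiring_def by blast
lemma ps_zero: "partial_semiring A \<Longrightarrow> pplus A a (pzero A) = Some a"
  unfolding partial_semiring_def by blast
lemma ps_zero2: "partial_semiring A \<Longrightarrow> pplus A (pzero A) a = Some a"
  using ps_comm ps_zero by metis
lemma ps_assoc: "partial_semiring A \<Longrightarrow> Option.bind (pplus A a b) (\<lambda>x. pplus A x c)
            = Option.bind (pplus A b c) (\<lambda>y. pplus A a y)"
  unfolding partial_semiring_def by blast
lemma ps_distl: "partial_semiring A \<Longrightarrow> pplus A b c = Some d \<Longrightarrow>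
          pplus A (ptimes A a b) (ptimes A a c) = Some (ptimes A a d)"
  unfolding partial_semiring_def by blast
lemma ps_distr: "partial_semiring A \<Longrightarrow> pplus A b c = Some d \<Longrightarrow>
          pplus A (ptimes A b a) (ptimes A c a) = Some (ptimes A d a)"
  unfolding partial_semiring_def by blast
lemma ps_ann: "partial_semiring A \<Longrightarrow> ptimes A a (pzero A) = pzero A"
  unfolding partial_semiring_def by blast
lemma ps_ann2: "partial_semiring A \<Longrightarrow> ptimes A (pzero A) a = pzero A"
  unfolding partial_semiring_def by blast
lemma ps_one: "partial_semiring A \<Longrightarrow> ptimes A a (pone A) = a"
  unfolding partial_semiring_def by blast

lemma ps_A1: "partial_semiring A \<Longrightarrow> pplus A a b = Some x \<Longrightarrow> pplus A x c = Some y
   \<Longrightarrow> \<exists>z. pplus A b c = Some z \<and> pplus A a z = Some y"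
  using ps_assoc[of A a b c] by (cases "pplus A b c") auto
lemma ps_A2: "partial_semiring A \<Longrightarrow> pplus A b c = Some z \<Longrightarrow> pplus A a z = Some y
   \<Longrightarrow> \<exists>x. pplus A a b = Some x \<and> pplus A x c = Some y"
  using ps_assoc[of A a b c] by (cases "pplus A a b") auto

lemma ps_R: assumes ps: "partial_semiring A" and h: "pplus A a b = Some p" "pplus A c d = Some q"
  "pplus A p q = Some w"
  shows "\<exists>r s. pplus A a c = Some r \<and> pplus A b d = Some s \<and> pplus A r s = Some w"
proof -
  obtain z where z: "pplus A b q = Some z" "pplus A a z = Some w" using ps_A1[OF ps h(1) h(3)] by blast
  have "pplus A q b = Some z" using z ps_comm[OF ps] by metis
  then obtain y where y: "pplus A c y = Some z" "pplus A d b = Some y" using ps_A1[OF ps h(2)] by blast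
  obtain r where r: "pplus A a c = Some r" "pplus A r y = Some w" using ps_A2[OF ps y(1) z(2)] by blast
  have "pplus A b d = Some y" using y ps_comm[OF ps] by metis
  then show ?thesis using r by blast
qed

lemma ps_down: assumes ps: "partial_semiring A" and h: "pplus A x p = Some x'" "pplus A y q = Some y'"
  "pplus A x' y' = Some s" shows "\<exists>r. pplus A x y = Some r"
  using ps_R[OF ps h] by blast

lemma fsum_empty_val: "fsum_rel A f {} v \<Longrightarrow> v = pzero A"
  by (cases rule: fsum_rel.cases) auto

lemma fsum_L1: assumes ps: "partial_semiring A"
  shows "fsum_rel A f G w \<Longrightarrow> x \<in> G \<Longrightarrow>
    \<exists>v. fsum_rel A f (G - {x}) v \<and> pplus A v (f x) = Some w"
proof (induction arbitrary: x rule: fsum_rel.induct)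
  case fsum_empty
  then show ?case by simp
next
  case (fsum_insert F v y w)
  show ?case
  proof (cases "y = x")
    case True
    then show ?thesis using fsum_insert by auto
  next
    case False
    then have "x \<in> F" using fsum_insert by auto
    then obtain v' where v': "fsum_rel A f (F - {x}) v'" "pplus A v' (f x) = Some v"
      using fsum_insert.IH by blast
    obtain z where z: "pplus A (f x) (f y) = Some z" "pplus A v' z = Some w"
      using ps_A1[OF ps v'(2) fsum_insert.hyps(3)] by blast
    have "pplus A (f y) (f x) = Some z" using z ps_comm[OF ps] by metis
    then obtain t where t: "pplus A v' (f y) = Some t" "pplus A t (f x) = Some w"
      using ps_A2[OF ps _ z(2)] by blast
    have "fsum_rel A f (insert y (F - {x})) t"
      using fsum_rel.fsum_insert[OF v'(1) _ t(1)] fsum_insert.hyps(2) by blast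
    moreover have "insert y (F - {x}) = insert y F - {x}" using False by blast
    ultimately show ?thesis using t by auto
  qed
qed

lemma fsum_rel_Un_zero: assumes ps: "partial_semiring A" and fin: "finite F"
  shows "fsum_rel A f (F \<inter> supp A f) v \<Longrightarrow> fsum_rel A f F v"
  using fin
proof (induction F arbitrary: v rule: finite_induct)
  case empty
  then show ?case by simp
next
  case (insert x F)
  show ?case
  proof (cases "x \<in> supp A f")
    case True
    then have e: "insert x F \<inter> supp A f = insert x (F \<inter> supp A f)" by blast
    obtain v' where v': "fsum_rel A f (insert x (F \<inter> supp A f) - {x}) v'" "pplus A v' (f x) = Some v"
      using fsum_L1[OF ps, of f "insert x (F \<inter> supp A f)" v x] insert.prems e by auto
    have "insert x (F \<inter> supp A f) - {x} = F \<inter> supp A f" using insert.hyps by blast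
    then have "fsum_rel A f F v'" using insert.IH v'(1) by simp
    then show ?thesis using fsum_rel.fsum_insert[of A f F v' x v] insert.hyps(2) v'(2) by blast
  next
    case False
    then have fx: "f x = pzero A" unfolding supp_def by simp
    have "insert x F \<inter> supp A f = F \<inter> supp A f" using False by blast
    then have "fsum_rel A f F v" using insert by simp
    then show ?thesis using fsum_rel.fsum_insert[of A f F v x v] insert.hyps(2) fx ps_zero[OF ps] by metis
  qed
qed

lemma fsum_rel_exists: assumes ps: "partial_semiring A" and w: "weighting A m" and fin: "finite F"
  shows "\<exists>v. fsum_rel A m F v"
proof -
  have "fsum A m (F \<inter> supp A m) \<noteq> None"
    using w fin unfolding weighting_def isum_def by (auto split: if_splits)
  then obtain v where "fsum_rel A m (F \<inter> supp A m) v" unfolding fsum_def by (auto split: if_splits)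
  then show ?thesis using fsum_rel_Un_zero[OF ps fin] by blast
qed

lemma weighting_intro: assumes "countable (supp A m)"
  and "\<And>F. finite F \<Longrightarrow> F \<subseteq> supp A m \<Longrightarrow> \<exists>v. fsum_rel A m F v"
  shows "weighting A m"
  using assms unfolding weighting_def isum_def fsum_def by auto

lemma fsum_scale: assumes ps: "partial_semiring A"
  shows "fsum_rel A m F v \<Longrightarrow> fsum_rel A (scale A u m) F (ptimes A u v)"
proof (induction rule: fsum_rel.induct)
  case fsum_empty
  then show ?case using ps_ann[OF ps] fsum_rel.fsum_empty by metis
next
  case (fsum_insert F v x w)
  then show ?case using fsum_rel.fsum_insert[OF fsum_insert.IH fsum_insert.hyps(2)]
      ps_distl[OF ps fsum_insert.hyps(3)] unfolding scale_def by blast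
qed

lemma weighting_scale: assumes ps: "partial_semiring A" and w: "weighting A m"
  shows "weighting A (scale A u m)"
proof -
  have sub: "supp A (scale A u m) \<subseteq> supp A m"
    unfolding supp_def scale_def using ps_ann[OF ps] by auto
  show ?thesis
  proof (rule weighting_intro)
    show "countable (supp A (scale A u m))" using sub w countable_subset unfolding weighting_def by blast
  next
    fix F assume "finite F" "F \<subseteq> supp A (scale A u m)"
    then show "\<exists>v. fsum_rel A (scale A u m) F v"
      using fsum_rel_exists[OF ps w] fsum_scale[OF ps] by blast
  qed
qed

lemma gs_ps: "good_semiring A \<Longrightarrow> partial_semiring A"
  unfolding good_semiring_def by blast
lemma gs_refl: "good_semiring A \<Longrightarrow> nle A u u"
  unfolding good_semiring_def by blast
lemma gs_antisym: "good_semiring A \<Longrightarrow> nle A u v \<Longrightarrow> nle A v u \<Longrightarrow> u = v"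
  unfolding good_semiring_def by blast
lemma gs_top: "good_semiring A \<Longrightarrow> \<exists>t. \<forall>u. nle A u t"
  unfolding good_semiring_def by blast

lemma lub_unique: "good_semiring A \<Longrightarrow> is_lub A S a \<Longrightarrow> is_lub A S b \<Longrightarrow> a = b"
  unfolding is_lub_def by (meson gs_antisym)

lemma nle_zero: "partial_semiring A \<Longrightarrow> nle A (pzero A) u"
  unfolding nle_def using ps_zero2 by metis

lemma fsum_empty_eq: "fsum A f {} = Some (pzero A)"
  unfolding fsum_def using fsum_empty_val fsum_rel.fsum_empty by (metis (mono_tags, lifting) the_equality)

lemma fsum_single_val: "partial_semiring A \<Longrightarrow> fsum_rel A f {x} v \<Longrightarrow> v = f x"
proof -
  assume ps: "partial_semiring A" and h: "fsum_rel A f {x} v"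
  obtain v' where "fsum_rel A f ({x} - {x}) v'" "pplus A v' (f x) = Some v"
    using fsum_L1[OF ps h] by blast
  then have "v' = pzero A" "pplus A v' (f x) = Some v" using fsum_empty_val by auto
  then show ?thesis using ps_zero2[OF ps] by simp
qed

lemma fsum_single_rel: "partial_semiring A \<Longrightarrow> fsum_rel A f {x} (f x)"
  using fsum_rel.fsum_insert[of A f "{}" "pzero A" x "f x"] fsum_rel.fsum_empty ps_zero2[of A "f x"] by blast

lemma fsum_single_eq: "partial_semiring A \<Longrightarrow> fsum A f {x} = Some (f x)"
  unfolding fsum_def using fsum_single_val fsum_single_rel by (metis (mono_tags, lifting) the_equality)

lemma isum_empty: assumes g: "good_semiring A" shows "isum A f {} = Some (pzero A)"
proof -
  have s: "{the (fsum A f F) | F. finite F \<and> F \<subseteq> {}} = {pzero A}"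
    using fsum_empty_eq[of A f] by auto
  have l: "is_lub A {pzero A} (pzero A)"
    unfolding is_lub_def using gs_refl[OF g] nle_zero[OF gs_ps[OF g]] by auto
  have "(THE v. is_lub A {pzero A} v) = pzero A"
    using l lub_unique[OF g] by blast
  then show ?thesis unfolding isum_def s using fsum_empty_eq[of A f] by auto
qed

lemma isum_single: assumes g: "good_semiring A" shows "isum A f {x} = Some (f x)"
proof -
  have ps: "partial_semiring A" using g gs_ps by blast
  have sub: "F \<subseteq> {x} \<longleftrightarrow> F = {} \<or> F = {x}" for F by blast
  have s: "{the (fsum A f F) | F. finite F \<and> F \<subseteq> {x}} = {pzero A, f x}"
    unfolding sub using fsum_empty_eq[of A f] fsum_single_eq[OF ps, of f x]
    by (safe; (force | (rule exI[of _ "{}"]; force) | (rule exI[of _ "{x}"]; force)))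
  have l: "is_lub A {pzero A, f x} (f x)"
    unfolding is_lub_def using gs_refl[OF g] nle_zero[OF ps] by auto
  have "(THE v. is_lub A {pzero A, f x} v) = f x"
    using l lub_unique[OF g] by blast
  moreover have "\<forall>F. finite F \<and> F \<subseteq> {x} \<longrightarrow> fsum A f F \<noteq> None"
    unfolding sub using fsum_empty_eq[of A f] fsum_single_eq[OF ps, of f x] by auto
  ultimately show ?thesis unfolding isum_def s by auto
qed

lemma defined_D: assumes g: "good_semiring A" and d: "pplus A u1 u2 = Some d"
  shows "\<exists>r. pplus A (ptimes A u1 a) (ptimes A u2 b) = Some r"
proof -
  have ps: "partial_semiring A" using g gs_ps by blast
  obtain t where t: "\<forall>u. nle A u t" using gs_top[OF g] by blast
  obtain p where p: "pplus A a p = Some t" using t unfolding nle_def by blast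
  obtain q where q: "pplus A b q = Some t" using t unfolding nle_def by blast
  show ?thesis using ps_down[OF ps ps_distl[OF ps p, of u1] ps_distl[OF ps q, of u2] ps_distr[OF ps d, of t]] .
qed

lemma sum_S: assumes g: "good_semiring A" and d: "pplus A u1 u2 = Some d" and fin: "finite F"
  shows "\<forall>v1 v2. fsum_rel A m1 F v1 \<longrightarrow> fsum_rel A m2 F v2 \<longrightarrow>
    (\<exists>w. pplus A (ptimes A u1 v1) (ptimes A u2 v2) = Some w \<and>
      fsum_rel A (\<lambda>\<tau>. the (pplus A (ptimes A u1 (m1 \<tau>)) (ptimes A u2 (m2 \<tau>)))) F w)"
  using fin
proof (induction F rule: finite_induct)
  case empty
  have ps: "partial_semiring A" using g gs_ps by blast
  show ?case
  proof (intro allI impI)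
    fix v1 v2 assume "fsum_rel A m1 {} v1" "fsum_rel A m2 {} v2"
    then have "v1 = pzero A" "v2 = pzero A" using fsum_empty_val[of A m1 v1] fsum_empty_val[of A m2 v2] by blast+
    then show "\<exists>w. pplus A (ptimes A u1 v1) (ptimes A u2 v2) = Some w \<and>
      fsum_rel A (\<lambda>\<tau>. the (pplus A (ptimes A u1 (m1 \<tau>)) (ptimes A u2 (m2 \<tau>)))) {} w"
      using ps_ann[OF ps] ps_zero[OF ps] fsum_rel.fsum_empty by metis
  qed
next
  case (insert x F)
  have ps: "partial_semiring A" using g gs_ps by blast
  let ?h = "\<lambda>\<tau>. the (pplus A (ptimes A u1 (m1 \<tau>)) (ptimes A u2 (m2 \<tau>)))"
  show ?case
  proof (intro allI impI)
    fix v1 v2 assume h1: "fsum_rel A m1 (insert x F) v1" and h2: "fsum_rel A m2 (insert x F) v2"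
    have e: "insert x F - {x} = F" using insert.hyps by blast
    obtain v1' where v1': "fsum_rel A m1 F v1'" "pplus A v1' (m1 x) = Some v1"
      using fsum_L1[OF ps h1, of x] e by auto
    obtain v2' where v2': "fsum_rel A m2 F v2'" "pplus A v2' (m2 x) = Some v2"
      using fsum_L1[OF ps h2, of x] e by auto
    obtain w' where w': "pplus A (ptimes A u1 v1') (ptimes A u2 v2') = Some w'" "fsum_rel A ?h F w'"
      using insert.IH v1'(1) v2'(1) by blast
    obtain w where w: "pplus A (ptimes A u1 v1) (ptimes A u2 v2) = Some w"
      using defined_D[OF g d] by blast
    obtain hx where hx: "pplus A (ptimes A u1 (m1 x)) (ptimes A u2 (m2 x)) = Some hx"
      using defined_D[OF g d] by blast
    obtain r s where rs: "pplus A (ptimes A u1 v1') (ptimes A u2 v2') = Some r"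
        "pplus A (ptimes A u1 (m1 x)) (ptimes A u2 (m2 x)) = Some s" "pplus A r s = Some w"
      using ps_R[OF ps ps_distl[OF ps v1'(2)] ps_distl[OF ps v2'(2)] w] by blast
    have "r = w'" "s = hx" "?h x = hx" using rs w' hx by auto
    then have "fsum_rel A ?h (insert x F) w"
      using fsum_rel.fsum_insert[of A ?h F w' x w] w'(2) insert.hyps(2) rs(3) by simp
    then show "\<exists>w. pplus A (ptimes A u1 v1) (ptimes A u2 v2) = Some w \<and> fsum_rel A ?h (insert x F) w"
      using w by blast
  qed
qed

lemma weighting_sum: assumes g: "good_semiring A" and d: "pplus A u1 u2 = Some d"
  and w1: "weighting A m1" and w2: "weighting A m2"
  shows "weighting A (\<lambda>\<tau>. the (pplus A (ptimes A u1 (m1 \<tau>)) (ptimes A u2 (m2 \<tau>))))"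
    (is "weighting A ?h")
proof -
  have ps: "partial_semiring A" using g gs_ps by blast
  have sub: "supp A ?h \<subseteq> supp A m1 \<union> supp A m2"
  proof
    fix \<tau> assume a: "\<tau> \<in> supp A ?h"
    show "\<tau> \<in> supp A m1 \<union> supp A m2"
    proof (rule ccontr)
      assume "\<tau> \<notin> supp A m1 \<union> supp A m2"
      then have "m1 \<tau> = pzero A" "m2 \<tau> = pzero A" unfolding supp_def by auto
      then have "?h \<tau> = pzero A" using ps_ann[OF ps] ps_zero[OF ps] by simp
      then show False using a unfolding supp_def by simp
    qed
  qed
  show ?thesis
  proof (rule weighting_intro)
    show "countable (supp A ?h)" using sub w1 w2 countable_subset countable_Un
      unfolding weighting_def by metis
  next
    fix F assume fin: "finite F" and "F \<subseteq> supp A ?h"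
    obtain v1 where "fsum_rel A m1 F v1" using fsum_rel_exists[OF ps w1 fin] by blast
    moreover obtain v2 where "fsum_rel A m2 F v2" using fsum_rel_exists[OF ps w2 fin] by blast
    ultimately show "\<exists>v. fsum_rel A ?h F v" using sum_S[OF g d fin, of m1 m2] by blast
  qed
qed

lemma kext_assume: assumes g: "good_semiring A" and C: "C \<sigma> = Some m" and w: "weighting A m"
  and tot: "\<forall>\<sigma>. C \<sigma> \<noteq> None"
  shows "kext A C (scale A u (eta A \<sigma>)) = Some (scale A u m)"
proof -
  have ps: "partial_semiring A" using g gs_ps by blast
  let ?mm = "scale A u (eta A \<sigma>)"
  let ?g = "\<lambda>\<tau>. isum A (\<lambda>\<sigma>'. ptimes A (?mm \<sigma>') (the (C \<sigma>') \<tau>)) (supp A ?mm)"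
  have mm: "?mm \<tau> = (if \<tau> = \<sigma> then u else pzero A)" for \<tau>
    unfolding scale_def eta_def using ps_one[OF ps] ps_ann[OF ps] by auto
  have gv: "?g \<tau> = Some (scale A u m \<tau>)" for \<tau>
  proof (cases "u = pzero A")
    case True
    then have "supp A ?mm = {}" unfolding supp_def using mm by auto
    then show ?thesis using isum_empty[OF g] True ps_ann2[OF ps] unfolding scale_def by simp
  next
    case False
    then have "supp A ?mm = {\<sigma>}" unfolding supp_def using mm by auto
    then show ?thesis using isum_single[OF g, of "\<lambda>\<sigma>'. ptimes A (?mm \<sigma>') (the (C \<sigma>') \<tau>)" \<sigma>] mm C
      unfolding scale_def by simp
  qed
  have "(\<lambda>\<tau>. the (?g \<tau>)) = scale A u m" using gv by simp
  then show ?thesis unfolding kext_def Let_def using gv tot weighting_scale[OF ps w] by simp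
qed

theorem lemmaA8:
  fixes A :: "'u psr"
    and e1 e2 :: "('s, 'u) expr"
    and C1 C2 :: "('s, 'u) den"
  assumes "good_semiring A"
    and "compatible A e1 e2"
    and "wf_den A C1" and "wf_den A C2"
    and "total_den C1" and "total_den C2"
  shows "total_den (sem_plus A (sem_seq A (sem_assume A e1) C1)
                               (sem_seq A (sem_assume A e2) C2))"
  unfolding total_den_def
proof
  fix \<sigma>
  have g: "good_semiring A" using assms(1) .
  obtain m1 where m1: "C1 \<sigma> = Some m1" using assms(5) unfolding total_den_def by blast
  obtain m2 where m2: "C2 \<sigma> = Some m2" using assms(6) unfolding total_den_def by blast
  have w1: "weighting A m1" using assms(3) m1 unfolding wf_den_def by blast
  have w2: "weighting A m2" using assms(4) m2 unfolding wf_den_def by blast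
  obtain d where d: "pplus A (eval A e1 \<sigma>) (eval A e2 \<sigma>) = Some d"
    using assms(2) unfolding compatible_def by blast
  have s1: "sem_seq A (sem_assume A e1) C1 \<sigma> = Some (scale A (eval A e1 \<sigma>) m1)"
    unfolding sem_seq_def sem_assume_def
    using kext_assume[OF g, of C1 \<sigma> m1, OF m1 w1] assms(5) unfolding total_den_def by simp
  have s2: "sem_seq A (sem_assume A e2) C2 \<sigma> = Some (scale A (eval A e2 \<sigma>) m2)"
    unfolding sem_seq_def sem_assume_def
    using kext_assume[OF g, of C2 \<sigma> m2, OF m2 w2] assms(6) unfolding total_den_def by simp
  have "wplus A (scale A (eval A e1 \<sigma>) m1) (scale A (eval A e2 \<sigma>) m2) \<noteq> None"
    unfolding wplus_def scale_def
    using defined_D[OF g d] weighting_sum[OF g d w1 w2] by auto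
  then show "sem_plus A (sem_seq A (sem_assume A e1) C1) (sem_seq A (sem_assume A e2) C2) \<sigma> \<noteq> None"
    unfolding sem_plus_def s1 s2 by simp
qed

end
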